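(* Let $q$ be a prime power and let $\alpha$ be a primitive element of $GF(q^2)$, so that every element $x\in GF(q^2)$ can be written uniquely as $x=a+b\alpha$ with $a,b\in GF(q)$. (i) For each $c\in GF(q)^*$ let $S_c=\{x\in GF(q^2)^*: x=a+c\alpha \text{ for some } a\in GF(q)\}$. Then the family $\{S_c\}_{c\in GF(q)^*}$ is a $(q^2-1,q-1,q,q-1,0)$-DPDF and a $(q^2-1,q-1,q,(q-1)(q-2),q^2-q)$-EPDF in the multiplicative group $GF(q^2)^*$. (ii) For each $c\in GF(q)^*$ let $S'_c=\{i: \alpha^i\in S_c,\ 0\le i\le q^2-2\}\subseteq \mathbb{Z}_{q^2-1}$. Then the family $\{S'_c\}_{c\in GF(q)^*}$ is a $(q^2-1,q-1,q,q-1,0)$-DPDF and a $(q^2-1,q-1,q,(q-1)(q-2),q^2-q)$-EPDF in the additive group $\mathbb{Z}_{q^2-1}$.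
   Context: Let $G$ be a finite group with identity $e$, written multiplicatively (in an additive group such as $\mathbb{Z}_v$ read $xy^{-1}$ as $x-y$ and $e$ as $0$); $G^*=G\setminus\{e\}$. For $D_1,D_2\subseteq G$, $\Delta(D_1,D_2)$ is the multiset $\{xy^{-1}: x\in D_1, y\in D_2\}$, and for $D\subseteq G$, $\Delta(D)$ is the multiset $\{xy^{-1}: x,y\in D, x\neq y\}$. For a family $A=\{A_1,\dots,A_s\}$ of pairwise disjoint subsets of $G$, ${\rm Int}(A)$ is the multiset union of the $\Delta(A_i)$, and ${\rm Ext}(A)$ is the multiset union of $\Delta(A_i,A_j)$ over all ordered pairs $i\neq j$. If $|G|=v$, a $(v,s,k,\lambda,\mu)$-disjoint partial difference family (DPDF) is a family of $s$ pairwise disjoint $k$-subsets $A_1,\dots,A_s$ of $G^*$ such that, with $S=\bigcup_i A_i$, the multiset ${\rm Int}(A)$ contains each element of $S$ exactly $\lambda$ times and each element of $G\setminus(S\cup\{e\})$ exactly $\mu$ times. A $(v,s,k,\lambda,\mu)$-external partial difference family (EPDF) is defined identically with ${\rm Ext}(A)$ in place of ${\rm Int}(A)$. *)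

theory Defs
  imports "HOL-Algebra.Elementary_Groups" "HOL-Library.Multiset" "HOL-Computational_Algebra.Primes"
begin

definition Delta2 :: "('a, 'b) monoid_scheme \<Rightarrow> 'a set \<Rightarrow> 'a set \<Rightarrow> 'a multiset" where
  "Delta2 G D1 D2 = image_mset (\<lambda>(x, y). x \<otimes>\<^bsub>G\<^esub> inv\<^bsub>G\<^esub> y) (mset_set (D1 \<times> D2))"

definition Delta1 :: "('a, 'b) monoid_scheme \<Rightarrow> 'a set \<Rightarrow> 'a multiset" where
  "Delta1 G D = image_mset (\<lambda>(x, y). x \<otimes>\<^bsub>G\<^esub> inv\<^bsub>G\<^esub> y) (mset_set {(x, y). x \<in> D \<and> y \<in> D \<and> x \<noteq> y})"

definition Int_fam :: "('a, 'b) monoid_scheme \<Rightarrow> 'i set \<Rightarrow> ('i \<Rightarrow> 'a set) \<Rightarrow> 'a multiset" where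
  "Int_fam G I A = (\<Sum>i\<in>I. Delta1 G (A i))"

definition Ext_fam :: "('a, 'b) monoid_scheme \<Rightarrow> 'i set \<Rightarrow> ('i \<Rightarrow> 'a set) \<Rightarrow> 'a multiset" where
  "Ext_fam G I A = (\<Sum>(i, j)\<in>{(i, j). i \<in> I \<and> j \<in> I \<and> i \<noteq> j}. Delta2 G (A i) (A j))"

definition disjoint_family_params ::
  "('a, 'b) monoid_scheme \<Rightarrow> nat \<Rightarrow> nat \<Rightarrow> nat \<Rightarrow> 'i set \<Rightarrow> ('i \<Rightarrow> 'a set) \<Rightarrow> bool" where
  "disjoint_family_params G v s k I A \<longleftrightarrow>
     group G \<and> finite (carrier G) \<and> card (carrier G) = v \<and>
     finite I \<and> card I = s \<and>
     (\<forall>i\<in>I. A i \<subseteq> carrier G - {\<one>\<^bsub>G\<^esub>} \<and> card (A i) = k) \<and>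
     (\<forall>i\<in>I. \<forall>j\<in>I. i \<noteq> j \<longrightarrow> A i \<inter> A j = {})"

definition DPDF ::
  "('a, 'b) monoid_scheme \<Rightarrow> nat \<Rightarrow> nat \<Rightarrow> nat \<Rightarrow> nat \<Rightarrow> nat \<Rightarrow> 'i set \<Rightarrow> ('i \<Rightarrow> 'a set) \<Rightarrow> bool" where
  "DPDF G v s k lam mu I A \<longleftrightarrow>
     disjoint_family_params G v s k I A \<and>
     (\<forall>x\<in>carrier G - {\<one>\<^bsub>G\<^esub>}.
        count (Int_fam G I A) x = (if x \<in> (\<Union>i\<in>I. A i) then lam else mu))"

definition EPDF ::
  "('a, 'b) monoid_scheme \<Rightarrow> nat \<Rightarrow> nat \<Rightarrow> nat \<Rightarrow> nat \<Rightarrow> nat \<Rightarrow> 'i set \<Rightarrow> ('i \<Rightarrow> 'a set) \<Rightarrow> bool" where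
  "EPDF G v s k lam mu I A \<longleftrightarrow>
     disjoint_family_params G v s k I A \<and>
     (\<forall>x\<in>carrier G - {\<one>\<^bsub>G\<^esub>}.
        count (Ext_fam G I A) x = (if x \<in> (\<Union>i\<in>I. A i) then lam else mu))"

definition mult_group_field :: "'a::field monoid" where
  "mult_group_field = \<lparr>carrier = UNIV - {0}, monoid.mult = (*), one = 1\<rparr>"

definition is_subfield :: "'a::field set \<Rightarrow> bool" where
  "is_subfield K \<longleftrightarrow> 0 \<in> K \<and> 1 \<in> K \<and>
     (\<forall>x\<in>K. \<forall>y\<in>K. x + y \<in> K \<and> x - y \<in> K \<and> x * y \<in> K) \<and>
     (\<forall>x\<in>K. x \<noteq> 0 \<longrightarrow> inverse x \<in> K)"

definition primitive_element :: "'a::field \<Rightarrow> bool" where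
  "primitive_element \<alpha> \<longleftrightarrow> \<alpha> \<noteq> 0 \<and> (\<forall>x. x \<noteq> 0 \<longrightarrow> (\<exists>n::nat. x = \<alpha> ^ n))"

definition prime_power :: "nat \<Rightarrow> bool" where
  "prime_power q \<longleftrightarrow> (\<exists>p m. prime p \<and> m \<ge> 1 \<and> q = p ^ m)"

definition S_set :: "'a::field set \<Rightarrow> 'a \<Rightarrow> 'a \<Rightarrow> 'a set" where
  "S_set K \<alpha> c = {x. x \<noteq> 0 \<and> (\<exists>a\<in>K. x = a + c * \<alpha>)}"

definition S'_set :: "nat \<Rightarrow> 'a::field set \<Rightarrow> 'a \<Rightarrow> 'a \<Rightarrow> int set" where
  "S'_set q K \<alpha> c = {i::int. 0 \<le> i \<and> i \<le> int (q ^ 2 - 2) \<and> \<alpha> ^ nat i \<in> S_set K \<alpha> c}"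

end

theory Submission
  imports Defs "HOL-Algebra.FiniteProduct"
begin


lemma count_Delta2:
  assumes "finite D1" "finite D2"
  shows "count (Delta2 G D1 D2) z = card {(x,y). x\<in>D1 \<and> y\<in>D2 \<and> x \<otimes>\<^bsub>G\<^esub> inv\<^bsub>G\<^esub> y = z}"
proof -
  have f: "finite (D1 \<times> D2)" using assms by simp
  have "count (Delta2 G D1 D2) z = (\<Sum>p\<in>(\<lambda>(x, y). x \<otimes>\<^bsub>G\<^esub> inv\<^bsub>G\<^esub> y) -` {z} \<inter> (D1 \<times> D2). 1)"
    unfolding Delta2_def count_image_mset using f by (intro sum.cong) auto
  also have "\<dots> = card ((\<lambda>(x, y). x \<otimes>\<^bsub>G\<^esub> inv\<^bsub>G\<^esub> y) -` {z} \<inter> (D1 \<times> D2))" by simp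
  also have "(\<lambda>(x, y). x \<otimes>\<^bsub>G\<^esub> inv\<^bsub>G\<^esub> y) -` {z} \<inter> (D1 \<times> D2) = {(x,y). x\<in>D1 \<and> y\<in>D2 \<and> x \<otimes>\<^bsub>G\<^esub> inv\<^bsub>G\<^esub> y = z}"
    by auto
  finally show ?thesis .
qed

lemma count_Delta1:
  assumes "finite D"
  shows "count (Delta1 G D) z = card {(x,y). x\<in>D \<and> y\<in>D \<and> x \<noteq> y \<and> x \<otimes>\<^bsub>G\<^esub> inv\<^bsub>G\<^esub> y = z}"
proof -
  let ?P = "{(x, y). x \<in> D \<and> y \<in> D \<and> x \<noteq> y}"
  have f: "finite ?P" by (rule finite_subset[of _ "D \<times> D"]) (auto simp: assms)
  have "count (Delta1 G D) z = (\<Sum>p\<in>(\<lambda>(x, y). x \<otimes>\<^bsub>G\<^esub> inv\<^bsub>G\<^esub> y) -` {z} \<inter> ?P. 1)"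
    unfolding Delta1_def count_image_mset using f by (intro sum.cong) auto
  also have "\<dots> = card ((\<lambda>(x, y). x \<otimes>\<^bsub>G\<^esub> inv\<^bsub>G\<^esub> y) -` {z} \<inter> ?P)" by simp
  also have "(\<lambda>(x, y). x \<otimes>\<^bsub>G\<^esub> inv\<^bsub>G\<^esub> y) -` {z} \<inter> ?P = {(x,y). x\<in>D \<and> y\<in>D \<and> x \<noteq> y \<and> x \<otimes>\<^bsub>G\<^esub> inv\<^bsub>G\<^esub> y = z}"
    by auto
  finally show ?thesis .
qed

lemma count_Delta1_Delta2:
  assumes "group G" "finite D" "D \<subseteq> carrier G" "z \<noteq> \<one>\<^bsub>G\<^esub>"
  shows "count (Delta1 G D) z = count (Delta2 G D D) z"
proof -
  have eq: "{(x,y). x\<in>D \<and> y\<in>D \<and> x \<noteq> y \<and> x \<otimes>\<^bsub>G\<^esub> inv\<^bsub>G\<^esub> y = z}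
      = {(x,y). x\<in>D \<and> y\<in>D \<and> x \<otimes>\<^bsub>G\<^esub> inv\<^bsub>G\<^esub> y = z}"
  proof -
    have "\<forall>x\<in>D. x \<otimes>\<^bsub>G\<^esub> inv\<^bsub>G\<^esub> x \<noteq> z"
      using assms group.r_inv[OF assms(1)] by auto
    then show ?thesis by blast
  qed
  show ?thesis by (simp only: count_Delta1[OF assms(2)] count_Delta2[OF assms(2) assms(2)] eq)
qed

lemma count_Int_fam:
  "count (Int_fam G I A) z = (\<Sum>i\<in>I. count (Delta1 G (A i)) z)"
  unfolding Int_fam_def count_sum by simp

lemma count_Ext_fam:
  "count (Ext_fam G I A) z = (\<Sum>p\<in>{(i, j). i \<in> I \<and> j \<in> I \<and> i \<noteq> j}. count (Delta2 G (A (fst p)) (A (snd p))) z)"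
  unfolding Ext_fam_def count_sum by (intro sum.cong) auto

lemma transport_card:
  assumes "group H" "group G" "h \<in> iso H G" "D1 \<subseteq> carrier H" "D2 \<subseteq> carrier H" "x \<in> carrier H"
  shows "card {(a,b). a\<in>D1 \<and> b\<in>D2 \<and> a \<otimes>\<^bsub>H\<^esub> inv\<^bsub>H\<^esub> b = x}
       = card {(a,b). a\<in>h`D1 \<and> b\<in>h`D2 \<and> a \<otimes>\<^bsub>G\<^esub> inv\<^bsub>G\<^esub> b = h x}"
proof -
  interpret gh: group_hom H G h using assms unfolding group_hom_def group_hom_axioms_def
    by (auto simp: iso_def)
  have hm: "\<And>a b. a \<in> carrier H \<Longrightarrow> b \<in> carrier H \<Longrightarrow> h (a \<otimes>\<^bsub>H\<^esub> inv\<^bsub>H\<^esub> b) = h a \<otimes>\<^bsub>G\<^esub> inv\<^bsub>G\<^esub> h b"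
    by (simp add: gh.hom_mult gh.hom_inv group.inv_closed[OF assms(1)])
  have inj: "inj_on h (carrier H)" using assms(3) by (auto simp: iso_def bij_betw_def)
  let ?S = "{(a,b). a\<in>D1 \<and> b\<in>D2 \<and> a \<otimes>\<^bsub>H\<^esub> inv\<^bsub>H\<^esub> b = x}"
  have eq: "map_prod h h ` ?S = {(a,b). a\<in>h`D1 \<and> b\<in>h`D2 \<and> a \<otimes>\<^bsub>G\<^esub> inv\<^bsub>G\<^esub> b = h x}"
  proof (intro equalityI subsetI)
    fix p assume "p \<in> map_prod h h ` ?S"
    then obtain a b where ab: "a \<in> D1" "b \<in> D2" "a \<otimes>\<^bsub>H\<^esub> inv\<^bsub>H\<^esub> b = x" "p = (h a, h b)" by auto
    have c: "a \<in> carrier H" "b \<in> carrier H" using ab assms(4,5) by auto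
    have "h a \<otimes>\<^bsub>G\<^esub> inv\<^bsub>G\<^esub> h b = h x" using ab hm[OF c] by simp
    then show "p \<in> {(a,b). a\<in>h`D1 \<and> b\<in>h`D2 \<and> a \<otimes>\<^bsub>G\<^esub> inv\<^bsub>G\<^esub> b = h x}" using ab by auto
  next
    fix p assume "p \<in> {(a,b). a\<in>h`D1 \<and> b\<in>h`D2 \<and> a \<otimes>\<^bsub>G\<^esub> inv\<^bsub>G\<^esub> b = h x}"
    then obtain a b where ab: "a \<in> D1" "b \<in> D2" "h a \<otimes>\<^bsub>G\<^esub> inv\<^bsub>G\<^esub> h b = h x" "p = (h a, h b)" by auto
    have c: "a \<in> carrier H" "b \<in> carrier H" using ab assms(4,5) by auto
    have hx: "h (a \<otimes>\<^bsub>H\<^esub> inv\<^bsub>H\<^esub> b) = h x" using ab hm[OF c] by simp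
    have ax: "a \<otimes>\<^bsub>H\<^esub> inv\<^bsub>H\<^esub> b = x" 
      using inj_onD[OF inj hx monoid.m_closed[OF group.is_monoid[OF assms(1)] c(1) group.inv_closed[OF assms(1) c(2)]] assms(6)] .
    show "p \<in> map_prod h h ` ?S" unfolding ab(4)
      by (rule image_eqI[where x="(a,b)"]) (use ab(1,2) ax in auto)
  qed
  have inj2: "inj_on (map_prod h h) ?S"
    by (rule inj_on_subset[OF map_prod_inj_on[OF inj inj]]) (use assms(4,5) in auto)
  have "card ?S = card (map_prod h h ` ?S)" by (rule sym, rule card_image[OF inj2])
  also have "\<dots> = card {(a,b). a\<in>h`D1 \<and> b\<in>h`D2 \<and> a \<otimes>\<^bsub>G\<^esub> inv\<^bsub>G\<^esub> b = h x}" by (rule arg_cong[OF eq])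
  finally show ?thesis .
qed


lemma transport_Delta2:
  assumes "group H" "group G" "h \<in> iso H G" "finite (carrier H)" "D1 \<subseteq> carrier H" "D2 \<subseteq> carrier H" "x \<in> carrier H"
  shows "count (Delta2 H D1 D2) x = count (Delta2 G (h`D1) (h`D2)) (h x)"
proof -
  have f: "finite D1" "finite D2" using assms(4,5,6) finite_subset by auto
  show ?thesis
    unfolding count_Delta2[OF f] count_Delta2[OF finite_imageI[OF f(1)] finite_imageI[OF f(2)]]
    by (rule transport_card[OF assms(1,2,3,5,6,7)])
qed

lemma transport_family:
  assumes H: "group H" and G: "group G" and iso: "h \<in> iso H G" and fin: "finite (carrier H)"
   and sub: "\<forall>i\<in>I. A' i \<subseteq> carrier H" and img: "\<forall>i\<in>I. A i = h ` A' i"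
   and dfp: "disjoint_family_params G v s k I A"
  shows "disjoint_family_params H v s k I A'"
    and "\<And>x. x \<in> carrier H - {\<one>\<^bsub>H\<^esub>} \<Longrightarrow> h x \<in> carrier G - {\<one>\<^bsub>G\<^esub>}"
    and "\<And>x. x \<in> carrier H - {\<one>\<^bsub>H\<^esub>} \<Longrightarrow> count (Int_fam H I A') x = count (Int_fam G I A) (h x)"
    and "\<And>x. x \<in> carrier H - {\<one>\<^bsub>H\<^esub>} \<Longrightarrow> count (Ext_fam H I A') x = count (Ext_fam G I A) (h x)"
    and "\<And>x. x \<in> carrier H \<Longrightarrow> (h x \<in> (\<Union>i\<in>I. A i)) = (x \<in> (\<Union>i\<in>I. A' i))"
proof -
  interpret gh: group_hom H G h using H G iso unfolding group_hom_def group_hom_axioms_def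
    by (auto simp: iso_def)
  have inj: "inj_on h (carrier H)" using iso by (auto simp: iso_def bij_betw_def)
  have bij: "bij_betw h (carrier H) (carrier G)" using iso by (auto simp: iso_def)
  have hc: "\<And>x. x \<in> carrier H \<Longrightarrow> h x \<in> carrier G" using bij by (auto simp: bij_betw_def)
  show memU: "\<And>x. x \<in> carrier H \<Longrightarrow> (h x \<in> (\<Union>i\<in>I. A i)) = (x \<in> (\<Union>i\<in>I. A' i))"
  proof -
    fix x assume x: "x \<in> carrier H"
    have "\<And>i y. i \<in> I \<Longrightarrow> y \<in> A' i \<Longrightarrow> h y = h x \<Longrightarrow> y = x"
      using inj x sub by (meson inj_onD subsetD)
    then show "(h x \<in> (\<Union>i\<in>I. A i)) = (x \<in> (\<Union>i\<in>I. A' i))" using img by auto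
  qed
  show hx1: "\<And>x. x \<in> carrier H - {\<one>\<^bsub>H\<^esub>} \<Longrightarrow> h x \<in> carrier G - {\<one>\<^bsub>G\<^esub>}"
  proof -
    fix x assume x: "x \<in> carrier H - {\<one>\<^bsub>H\<^esub>}"
    have "h x \<noteq> h \<one>\<^bsub>H\<^esub>" using x inj_onD[OF inj] gh.G.one_closed by blast
    then show "h x \<in> carrier G - {\<one>\<^bsub>G\<^esub>}" using x hc by simp
  qed
  have dG: "group G \<and> finite (carrier G) \<and> card (carrier G) = v \<and> finite I \<and> card I = s \<and>
     (\<forall>i\<in>I. A i \<subseteq> carrier G - {\<one>\<^bsub>G\<^esub>} \<and> card (A i) = k) \<and>
     (\<forall>i\<in>I. \<forall>j\<in>I. i \<noteq> j \<longrightarrow> A i \<inter> A j = {})" using dfp unfolding disjoint_family_params_def .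
  have cH: "card (carrier H) = v" using dG bij_betw_same_card[OF bij] by simp
  have A'1: "\<forall>i\<in>I. A' i \<subseteq> carrier H - {\<one>\<^bsub>H\<^esub>}"
  proof (intro ballI)
    fix i assume i: "i \<in> I"
    have "\<one>\<^bsub>H\<^esub> \<notin> A' i"
    proof
      assume "\<one>\<^bsub>H\<^esub> \<in> A' i"
      then have "h \<one>\<^bsub>H\<^esub> \<in> h ` A' i" by (rule imageI)
      then have "h \<one>\<^bsub>H\<^esub> \<in> A i" using img i by simp
      then show False using dG i by auto
    qed
    then show "A' i \<subseteq> carrier H - {\<one>\<^bsub>H\<^esub>}" using sub i by auto
  qed
  have A'2: "\<forall>i\<in>I. card (A' i) = k"
  proof (intro ballI)
    fix i assume i: "i \<in> I"
    have "card (A' i) = card (h ` A' i)" using inj_on_subset[OF inj] sub i by (simp add: card_image)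
    then show "card (A' i) = k" using img dG i by auto
  qed
  have A'3: "\<forall>i\<in>I. \<forall>j\<in>I. i \<noteq> j \<longrightarrow> A' i \<inter> A' j = {}"
  proof (intro ballI impI)
    fix i j assume ij: "i \<in> I" "j \<in> I" "i \<noteq> j"
    have "A i \<inter> A j = {}" using dG ij by blast
    then show "A' i \<inter> A' j = {}" using img ij by auto
  qed
  show "disjoint_family_params H v s k I A'"
    unfolding disjoint_family_params_def using H fin cH dG A'1 A'2 A'3 by blast
  have finA': "\<And>i. i \<in> I \<Longrightarrow> finite (A' i)" using sub fin finite_subset by blast
  have finA: "\<And>i. i \<in> I \<Longrightarrow> finite (A i)" using finA' img by simp
  have subA: "\<And>i. i \<in> I \<Longrightarrow> A i \<subseteq> carrier G" using dG by blast
  show "count (Int_fam H I A') x = count (Int_fam G I A) (h x)" if x: "x \<in> carrier H - {\<one>\<^bsub>H\<^esub>}" for x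
  proof -
    have "count (Int_fam H I A') x = (\<Sum>i\<in>I. count (Delta1 H (A' i)) x)" by (rule count_Int_fam)
    also have "\<dots> = (\<Sum>i\<in>I. count (Delta1 G (A i)) (h x))"
    proof (rule sum.cong[OF refl])
      fix i assume i: "i \<in> I"
      have "count (Delta1 H (A' i)) x = count (Delta2 H (A' i) (A' i)) x"
        using count_Delta1_Delta2[OF H finA'[OF i] sub[rule_format, OF i]] x by simp
      also have "\<dots> = count (Delta2 G (A i) (A i)) (h x)"
        using transport_Delta2[OF H G iso fin sub[rule_format, OF i] sub[rule_format, OF i]] x img i by simp
      also have "\<dots> = count (Delta1 G (A i)) (h x)"
        using count_Delta1_Delta2[OF G finA[OF i] subA[OF i]] hx1[OF x] by simp
      finally show "count (Delta1 H (A' i)) x = count (Delta1 G (A i)) (h x)" .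
    qed
    also have "\<dots> = count (Int_fam G I A) (h x)" by (rule count_Int_fam[symmetric])
    finally show ?thesis .
  qed
  show "count (Ext_fam H I A') x = count (Ext_fam G I A) (h x)" if x: "x \<in> carrier H - {\<one>\<^bsub>H\<^esub>}" for x
    unfolding count_Ext_fam
  proof (rule sum.cong[OF refl])
    fix p assume p: "p \<in> {(i, j). i \<in> I \<and> j \<in> I \<and> i \<noteq> j}"
    then have i: "fst p \<in> I" "snd p \<in> I" by auto
    show "count (Delta2 H (A' (fst p)) (A' (snd p))) x = count (Delta2 G (A (fst p)) (A (snd p))) (h x)"
      using transport_Delta2[OF H G iso fin sub[rule_format, OF i(1)] sub[rule_format, OF i(2)]] x img i by simp
  qed
qed

lemma transport_DPDF:
  assumes H: "group H" and G: "group G" and iso: "h \<in> iso H G" and fin: "finite (carrier H)"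
   and sub: "\<forall>i\<in>I. A' i \<subseteq> carrier H" and img: "\<forall>i\<in>I. A i = h ` A' i"
   and D: "DPDF G v s k l m I A"
  shows "DPDF H v s k l m I A'"
proof -
  have dfp: "disjoint_family_params G v s k I A" using D by (simp add: DPDF_def)
  note T = transport_family[OF H G iso fin sub img dfp]
  show ?thesis unfolding DPDF_def
  proof (intro conjI ballI)
    show "disjoint_family_params H v s k I A'" by (rule T(1))
    fix x assume x: "x \<in> carrier H - {\<one>\<^bsub>H\<^esub>}"
    have "count (Int_fam G I A) (h x) = (if h x \<in> (\<Union>i\<in>I. A i) then l else m)"
      using D T(2)[OF x] by (simp add: DPDF_def)
    then show "count (Int_fam H I A') x = (if x \<in> (\<Union>i\<in>I. A' i) then l else m)"
      using T(3)[OF x] T(5) x by simp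
  qed
qed

lemma transport_EPDF:
  assumes H: "group H" and G: "group G" and iso: "h \<in> iso H G" and fin: "finite (carrier H)"
   and sub: "\<forall>i\<in>I. A' i \<subseteq> carrier H" and img: "\<forall>i\<in>I. A i = h ` A' i"
   and D: "EPDF G v s k l m I A"
  shows "EPDF H v s k l m I A'"
proof -
  have dfp: "disjoint_family_params G v s k I A" using D by (simp add: EPDF_def)
  note T = transport_family[OF H G iso fin sub img dfp]
  show ?thesis unfolding EPDF_def
  proof (intro conjI ballI)
    show "disjoint_family_params H v s k I A'" by (rule T(1))
    fix x assume x: "x \<in> carrier H - {\<one>\<^bsub>H\<^esub>}"
    have "count (Ext_fam G I A) (h x) = (if h x \<in> (\<Union>i\<in>I. A i) then l else m)"
      using D T(2)[OF x] by (simp add: EPDF_def)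
    then show "count (Ext_fam H I A') x = (if x \<in> (\<Union>i\<in>I. A' i) then l else m)"
      using T(4)[OF x] T(5) x by simp
  qed
qed




lemma comm_group_mgf: "comm_group (mult_group_field :: 'a::field monoid)"
proof (rule comm_groupI)
  fix x :: 'a assume x: "x \<in> carrier mult_group_field"
  then show "\<exists>y\<in>carrier mult_group_field. y \<otimes>\<^bsub>mult_group_field\<^esub> x = \<one>\<^bsub>mult_group_field\<^esub>"
    by (intro bexI[of _ "inverse x"]) (auto simp: mult_group_field_def)
qed (auto simp: mult_group_field_def mult.assoc mult.commute)

lemma group_mgf: "group (mult_group_field :: 'a::field monoid)"
  using comm_group_mgf comm_group_def by blast

lemma carrier_mgf[simp]: "carrier (mult_group_field :: 'a::field monoid) = UNIV - {0}"
  by (simp add: mult_group_field_def)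
lemma mult_mgf[simp]: "x \<otimes>\<^bsub>(mult_group_field :: 'a::field monoid)\<^esub> y = x * y"
  by (simp add: mult_group_field_def)
lemma one_mgf[simp]: "\<one>\<^bsub>(mult_group_field :: 'a::field monoid)\<^esub> = 1"
  by (simp add: mult_group_field_def)
lemma inv_mgf: "(y::'a::field) \<noteq> 0 \<Longrightarrow> inv\<^bsub>mult_group_field\<^esub> y = inverse y"
  by (rule group.inv_equality[OF group_mgf]) auto
lemma pow_mgf: "x [^]\<^bsub>(mult_group_field :: 'a::field monoid)\<^esub> (n::nat) = x ^ n"
  by (induction n) auto

lemma alpha_pow_card:
  fixes \<alpha> :: "'a::{field,finite}"
  assumes "\<alpha> \<noteq> 0"
  shows "\<alpha> ^ (card (UNIV :: 'a set) - 1) = 1"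
proof -
  have "\<alpha> [^]\<^bsub>(mult_group_field :: 'a monoid)\<^esub> card (carrier (mult_group_field :: 'a monoid)) = 1"
    using comm_group.power_order_eq_one[OF comm_group_mgf, of \<alpha>] assms by simp
  moreover have "card (carrier (mult_group_field :: 'a monoid)) = card (UNIV :: 'a set) - 1"
    by (simp add: card_Diff_singleton)
  ultimately show ?thesis by (simp add: pow_mgf)
qed

lemma pairs_card:
  fixes z :: "'a::{field,finite}"
  assumes "z \<noteq> 0" "0 \<notin> C" "0 \<notin> D"
  shows "card {(x,y). x\<in>C \<and> y\<in>D \<and> x \<otimes>\<^bsub>mult_group_field\<^esub> inv\<^bsub>mult_group_field\<^esub> y = z}
       = card {y. y \<in> D \<and> z*y \<in> C}"
proof -
  have "{(x,y). x\<in>C \<and> y\<in>D \<and> x \<otimes>\<^bsub>mult_group_field\<^esub> inv\<^bsub>mult_group_field\<^esub> y = z}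
      = (\<lambda>y. (z*y, y)) ` {y. y \<in> D \<and> z*y \<in> C}"
  proof (intro equalityI subsetI)
    fix p assume "p \<in> {(x,y). x\<in>C \<and> y\<in>D \<and> x \<otimes>\<^bsub>mult_group_field\<^esub> inv\<^bsub>mult_group_field\<^esub> y = z}"
    then obtain x y where p: "p = (x,y)" "x \<in> C" "y \<in> D" "x * inv\<^bsub>mult_group_field\<^esub> y = z"
      by auto
    have y0: "y \<noteq> 0" using p assms by auto
    then have "x * inverse y = z" using p by (simp add: inv_mgf)
    then have "x = z * y" using y0 by (auto simp: field_simps)
    then show "p \<in> (\<lambda>y. (z*y, y)) ` {y. y \<in> D \<and> z*y \<in> C}" using p by auto
  next
    fix p assume "p \<in> (\<lambda>y. (z*y, y)) ` {y. y \<in> D \<and> z*y \<in> C}"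
    then obtain y where p: "p = (z*y, y)" "y \<in> D" "z*y \<in> C" by auto
    have "y \<noteq> 0" using p assms by auto
    then show "p \<in> {(x,y). x\<in>C \<and> y\<in>D \<and> x \<otimes>\<^bsub>mult_group_field\<^esub> inv\<^bsub>mult_group_field\<^esub> y = z}"
      using p by (auto simp: inv_mgf)
  qed
  moreover have "inj_on (\<lambda>y. (z*y, y)) {y. y \<in> D \<and> z*y \<in> C}" by (auto simp: inj_on_def)
  ultimately show ?thesis by (simp add: card_image)
qed




locale ffs =
  fixes q :: nat and K :: "'a::{field,finite} set" and \<alpha> :: 'a
  assumes cU: "card (UNIV :: 'a set) = q ^ 2"
    and subK: "is_subfield K" and cK: "card K = q"
    and prim: "primitive_element \<alpha>" and q2: "q \<ge> 2"
begin

lemma K0: "0 \<in> K" using subK unfolding is_subfield_def by blast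
lemma K1: "1 \<in> K" using subK unfolding is_subfield_def by blast
lemma Kdiff: "x \<in> K \<Longrightarrow> y \<in> K \<Longrightarrow> x - y \<in> K" using subK unfolding is_subfield_def by blast
lemma Kmult: "x \<in> K \<Longrightarrow> y \<in> K \<Longrightarrow> x * y \<in> K" using subK unfolding is_subfield_def by blast
lemma Kinv: "x \<in> K \<Longrightarrow> inverse x \<in> K"
  using subK K0 unfolding is_subfield_def by (cases "x = 0") auto

lemma alpha0: "\<alpha> \<noteq> 0" using prim by (simp add: primitive_element_def)

lemma alpha_notin: "\<alpha> \<notin> K"
proof
  assume a: "\<alpha> \<in> K"
  have p: "\<alpha> ^ n \<in> K" for n by (induction n) (auto intro: K1 Kmult a)
  have "\<forall>x. x \<in> K"
  proof
    fix x :: 'a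
    show "x \<in> K"
    proof (cases "x = 0")
      case True then show ?thesis using K0 by simp
    next
      case False
      then obtain n :: nat where "x = \<alpha> ^ n" using prim by (auto simp: primitive_element_def)
      then show ?thesis using p by simp
    qed
  qed
  then have "K = UNIV" by auto
  then have "q ^ 2 = q" using cU cK by simp
  then show False using q2 by (simp add: power2_eq_square)
qed

lemma uniq:
  assumes "a \<in> K" "b \<in> K" "a' \<in> K" "b' \<in> K" "a + b * \<alpha> = a' + b' * \<alpha>"
  shows "a = a' \<and> b = b'"
proof (cases "b = b'")
  case True then show ?thesis using assms by simp
next
  case False
  then have "(b - b') * \<alpha> = a' - a" using assms(5) by (simp add: algebra_simps)
  then have "\<alpha> = (a' - a) * inverse (b - b')" using False by (simp add: field_simps)
  moreover have "(a' - a) * inverse (b - b') \<in> K" using assms by (intro Kmult Kdiff Kinv)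
  ultimately show ?thesis using alpha_notin by simp
qed

lemma rep: "\<exists>a\<in>K. \<exists>b\<in>K. y = a + b * \<alpha>"
proof -
  let ?P = "\<lambda>p. fst p + snd p * \<alpha>"
  have inj: "inj_on ?P (K \<times> K)" using uniq by (auto simp: inj_on_def)
  have fK: "finite K" by simp
  have "card (?P ` (K \<times> K)) = q ^ 2" using card_image[OF inj] cK by (simp add: card_cartesian_product power2_eq_square)
  then have "?P ` (K \<times> K) = UNIV" using cU by (intro card_subset_eq) auto
  then have "y \<in> ?P ` (K \<times> K)" by simp
  then show ?thesis by force
qed

definition Bc :: "'a \<Rightarrow> 'a" where
  "Bc y = (SOME b. b \<in> K \<and> (\<exists>a\<in>K. y = a + b * \<alpha>))"

lemma Bc_spec: "Bc y \<in> K \<and> (\<exists>a\<in>K. y = a + Bc y * \<alpha>)"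
  unfolding Bc_def by (rule someI_ex) (use rep in blast)

lemma BcK: "Bc y \<in> K" using Bc_spec by blast

lemma Bc_eq: "a \<in> K \<Longrightarrow> b \<in> K \<Longrightarrow> y = a + b * \<alpha> \<Longrightarrow> Bc y = b"
proof -
  assume ab: "a \<in> K" "b \<in> K" "y = a + b * \<alpha>"
  obtain a' where a': "a' \<in> K" "y = a' + Bc y * \<alpha>" using Bc_spec by blast
  have "a + b * \<alpha> = a' + Bc y * \<alpha>" using ab(3) a'(2) by simp
  from uniq[OF ab(1,2) a'(1) BcK this] show "Bc y = b" by simp
qed

lemma Bc_diff: "Bc (x - y) = Bc x - Bc y"
proof -
  obtain a where a: "a \<in> K" "x = a + Bc x * \<alpha>" using Bc_spec by blast
  obtain b where b: "b \<in> K" "y = b + Bc y * \<alpha>" using Bc_spec by blast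
  have "x - y = (a - b) + (Bc x - Bc y) * \<alpha>" using a b by (simp add: algebra_simps)
  then show ?thesis by (rule Bc_eq[OF Kdiff[OF a(1) b(1)] Kdiff[OF BcK BcK]])
qed

lemma Bc_mult: "t \<in> K \<Longrightarrow> Bc (t * y) = t * Bc y"
proof -
  assume t: "t \<in> K"
  obtain a where a: "a \<in> K" "y = a + Bc y * \<alpha>" using Bc_spec by blast
  have "t * y = t * (a + Bc y * \<alpha>)" using arg_cong[OF a(2), of "\<lambda>u. t * u"] .
  also have "\<dots> = t * a + (t * Bc y) * \<alpha>" by (simp add: algebra_simps)
  finally have "t * y = t * a + (t * Bc y) * \<alpha>" .
  then show ?thesis by (rule Bc_eq[OF Kmult[OF t a(1)] Kmult[OF t BcK]])
qed

lemma Bc_zero: "Bc y = 0 \<longleftrightarrow> y \<in> K"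
proof
  assume "Bc y = 0"
  then show "y \<in> K" using Bc_spec[of y] by auto
next
  assume "y \<in> K"
  then show "Bc y = 0" using Bc_eq[of y 0 y] K0 by simp
qed

lemma S_eq: "c \<in> K - {0} \<Longrightarrow> S_set K \<alpha> c = {y. Bc y = c}"
proof -
  assume c: "c \<in> K - {0}"
  show ?thesis
  proof (intro equalityI subsetI)
    fix y assume "y \<in> S_set K \<alpha> c"
    then obtain a where a: "a \<in> K" "y = a + c * \<alpha>" by (auto simp: S_set_def)
    have "Bc y = c" using Bc_eq[OF a(1) _ a(2)] c by simp
    then show "y \<in> {y. Bc y = c}" by simp
  next
    fix y assume y: "y \<in> {y. Bc y = c}"
    then have "y \<notin> K" using Bc_zero c by auto
    then have "y \<noteq> 0" using K0 by auto
    then show "y \<in> S_set K \<alpha> c" using Bc_spec[of y] y by (auto simp: S_set_def)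
  qed
qed

lemma card_Phi:
  assumes z: "z \<notin> K"
  shows "card {y. Q (Bc y, Bc (z * y))} = card {p \<in> K \<times> K. Q p}"
proof -
  define F where "F = (\<lambda>y. (Bc y, Bc (z * y)))"
  have inj: "inj F"
  proof (rule injI)
    fix x y assume e: "F x = F y"
    then have e1: "Bc x = Bc y" and e2: "Bc (z * x) = Bc (z * y)" by (simp_all add: F_def)
    have "Bc (x - y) = 0" using e1 by (simp add: Bc_diff)
    moreover have "z * (x - y) = z * x - z * y" by (simp add: algebra_simps)
    then have "Bc (z * (x - y)) = 0" using e2 by (simp add: Bc_diff)
    ultimately have k: "x - y \<in> K" "z * (x - y) \<in> K" using Bc_zero by blast+
    show "x = y"
    proof (rule ccontr)
      assume "x \<noteq> y"
      then have "z = (z * (x - y)) * inverse (x - y)" by (simp add: field_simps)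
      also have "\<dots> \<in> K" by (rule Kmult[OF k(2) Kinv[OF k(1)]])
      finally show False using z by simp
    qed
  qed
  have img: "range F = K \<times> K"
  proof (rule card_subset_eq)
    show "range F \<subseteq> K \<times> K" using BcK by (auto simp: F_def)
    show "card (range F) = card (K \<times> K)"
      using card_image[OF inj] cU cK by (simp add: card_cartesian_product power2_eq_square)
  qed simp
  have "card {y. Q (F y)} = card (F ` {y. Q (F y)})"
    by (rule card_image[symmetric], rule inj_on_subset[OF inj subset_UNIV])
  also have "F ` {y. Q (F y)} = {p \<in> K \<times> K. Q p}"
  proof (intro equalityI subsetI)
    fix p assume "p \<in> F ` {y. Q (F y)}"
    then obtain y where y: "p = F y" "Q (F y)" by blast
    have "F y \<in> range F" by (rule rangeI)
    then show "p \<in> {p \<in> K \<times> K. Q p}" using y img by simp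
  next
    fix p assume p: "p \<in> {p \<in> K \<times> K. Q p}"
    then have "p \<in> range F" using img by simp
    then obtain y where "p = F y" by blast
    then show "p \<in> F ` {y. Q (F y)}" using p by blast
  qed
  finally show ?thesis by (simp add: F_def)
qed

lemma N_int:
  assumes "z \<noteq> 0" "z \<noteq> 1"
  shows "card {y. Bc y \<noteq> 0 \<and> Bc (z*y) = Bc y} = (if z \<in> K then 0 else q - 1)"
proof (cases "z \<in> K")
  case True
  have "{y. Bc y \<noteq> 0 \<and> Bc (z*y) = Bc y} = {}"
    using True assms(2) by (auto simp: Bc_mult)
  then show ?thesis using True by simp
next
  case False
  have "card {y. Bc y \<noteq> 0 \<and> Bc (z*y) = Bc y} = card {p \<in> K \<times> K. fst p \<noteq> 0 \<and> snd p = fst p}"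
    using card_Phi[OF False, of "\<lambda>p. fst p \<noteq> 0 \<and> snd p = fst p"] by simp
  also have "{p \<in> K \<times> K. fst p \<noteq> 0 \<and> snd p = fst p} = (\<lambda>c. (c, c)) ` (K - {0})" by auto
  also have "card \<dots> = card (K - {0})" by (rule card_image) (auto simp: inj_on_def)
  also have "\<dots> = q - 1" using cK K0 by (simp add: card_Diff_singleton)
  finally show ?thesis using False by simp
qed

lemma N_ext:
  assumes "z \<noteq> 0" "z \<noteq> 1"
  shows "card {y. Bc y \<noteq> 0 \<and> Bc (z*y) \<noteq> 0 \<and> Bc (z*y) \<noteq> Bc y} = (if z \<in> K then q^2 - q else (q - 1) * (q - 2))"
proof (cases "z \<in> K")
  case True
  have "{y. Bc y \<noteq> 0 \<and> Bc (z*y) \<noteq> 0 \<and> Bc (z*y) \<noteq> Bc y} = UNIV - K"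
    using True assms by (auto simp: Bc_mult Bc_zero[symmetric])
  then show ?thesis using True cU cK by (simp add: card_Diff_subset)
next
  case False
  let ?D = "(\<lambda>c. (c, c)) ` (K - {0})"
  have "card {y. Bc y \<noteq> 0 \<and> Bc (z*y) \<noteq> 0 \<and> Bc (z*y) \<noteq> Bc y} = card {p \<in> K \<times> K. fst p \<noteq> 0 \<and> snd p \<noteq> 0 \<and> snd p \<noteq> fst p}"
    using card_Phi[OF False, of "\<lambda>p. fst p \<noteq> 0 \<and> snd p \<noteq> 0 \<and> snd p \<noteq> fst p"] by simp
  also have "{p \<in> K \<times> K. fst p \<noteq> 0 \<and> snd p \<noteq> 0 \<and> snd p \<noteq> fst p} = (K - {0}) \<times> (K - {0}) - ?D" by auto
  also have "card \<dots> = card ((K - {0}) \<times> (K - {0})) - card ?D" by (rule card_Diff_subset) auto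
  also have "card ?D = q - 1"
    using cK K0 by (subst card_image) (auto simp: inj_on_def card_Diff_singleton)
  also have "card ((K - {0}) \<times> (K - {0})) = (q - 1) * (q - 1)"
    using cK K0 by (simp add: card_cartesian_product card_Diff_singleton)
  also have "(q - 1) * (q - 1) - (q - 1) = (q - 1) * (q - 2)"
    using q2 by (simp add: algebra_simps diff_mult_distrib2)
  finally show ?thesis using False by simp
qed

end



context ffs begin

lemma S0: "c \<in> K - {0} \<Longrightarrow> 0 \<notin> S_set K \<alpha> c" by (simp add: S_set_def)

lemma dfp1: "disjoint_family_params mult_group_field (q^2-1) (q-1) q (K-{0}) (S_set K \<alpha>)"
  unfolding disjoint_family_params_def
proof (intro conjI ballI impI)
  show "group (mult_group_field :: 'a monoid)" by (rule group_mgf)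
  show "finite (carrier (mult_group_field :: 'a monoid))" by simp
  show "card (carrier (mult_group_field :: 'a monoid)) = q^2 - 1" using cU by (simp add: card_Diff_singleton)
  show "finite (K - {0})" by simp
  show "card (K - {0}) = q - 1" using cK K0 by (simp add: card_Diff_singleton)
next
  fix c assume c: "c \<in> K - {0}"
  have b1: "Bc 1 = 0" using Bc_zero K1 by simp
  have b0: "Bc 0 = 0" using Bc_zero K0 by simp
  show "S_set K \<alpha> c \<subseteq> carrier mult_group_field - {\<one>\<^bsub>mult_group_field\<^esub>}"
  proof
    fix y assume "y \<in> S_set K \<alpha> c"
    then have "Bc y = c" using S_eq[OF c] by simp
    then have "y \<noteq> 0" "y \<noteq> 1" using b0 b1 c by auto
    then show "y \<in> carrier mult_group_field - {\<one>\<^bsub>mult_group_field\<^esub>}" by simp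
  qed
  have "S_set K \<alpha> c = (\<lambda>a. a + c * \<alpha>) ` K"
  proof (intro equalityI subsetI)
    fix y assume "y \<in> S_set K \<alpha> c" then show "y \<in> (\<lambda>a. a + c * \<alpha>) ` K" by (auto simp: S_set_def)
  next
    fix y assume "y \<in> (\<lambda>a. a + c * \<alpha>) ` K"
    then obtain a where a: "a \<in> K" "y = a + c * \<alpha>" by blast
    then have "Bc y = c" using Bc_eq c by blast
    then show "y \<in> S_set K \<alpha> c" using S_eq[OF c] by simp
  qed
  also have "card \<dots> = card K" by (rule card_image) (auto simp: inj_on_def)
  finally show "card (S_set K \<alpha> c) = q" using cK by simp
next
  fix i j assume "i \<in> K - {0}" "j \<in> K - {0}" "i \<noteq> j"
  then show "S_set K \<alpha> i \<inter> S_set K \<alpha> j = {}" using S_eq by auto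
qed

lemma union_S: "(\<Union>c\<in>K-{0}. S_set K \<alpha> c) = {y. Bc y \<noteq> 0}"
proof (intro equalityI subsetI)
  fix y assume "y \<in> (\<Union>c\<in>K-{0}. S_set K \<alpha> c)"
  then show "y \<in> {y. Bc y \<noteq> 0}" using S_eq by auto
next
  fix y assume "y \<in> {y. Bc y \<noteq> 0}"
  then have "Bc y \<in> K - {0}" using BcK by simp
  moreover have "y \<in> S_set K \<alpha> (Bc y)" using S_eq[OF calculation] by simp
  ultimately show "y \<in> (\<Union>c\<in>K-{0}. S_set K \<alpha> c)" by blast
qed

lemma count_pair:
  assumes z: "z \<noteq> 0" "z \<noteq> 1" and c: "c \<in> K - {0}" and d: "d \<in> K - {0}"
  shows "count (Delta2 mult_group_field (S_set K \<alpha> c) (S_set K \<alpha> d)) z = card {y. Bc y = d \<and> Bc (z*y) = c}"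
proof -
  have "count (Delta2 mult_group_field (S_set K \<alpha> c) (S_set K \<alpha> d)) z
     = card {y. y \<in> S_set K \<alpha> d \<and> z*y \<in> S_set K \<alpha> c}"
    unfolding count_Delta2[OF finite finite] by (rule pairs_card[OF z(1) S0[OF c] S0[OF d]])
  also have "{y. y \<in> S_set K \<alpha> d \<and> z*y \<in> S_set K \<alpha> c} = {y. Bc y = d \<and> Bc (z*y) = c}"
    using S_eq[OF c] S_eq[OF d] by simp
  finally show ?thesis .
qed

lemma count_Int1:
  assumes z: "z \<noteq> 0" "z \<noteq> 1"
  shows "count (Int_fam mult_group_field (K-{0}) (S_set K \<alpha>)) z = card {y. Bc y \<noteq> 0 \<and> Bc (z*y) = Bc y}"
proof -
  let ?S0 = "{y. Bc y \<noteq> 0 \<and> Bc (z*y) = Bc y}"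
  have "count (Int_fam mult_group_field (K-{0}) (S_set K \<alpha>)) z
      = (\<Sum>c\<in>K-{0}. count (Delta1 mult_group_field (S_set K \<alpha> c)) z)" by (rule count_Int_fam)
  also have "\<dots> = (\<Sum>c\<in>K-{0}. card {x \<in> ?S0. Bc x = c})"
  proof (rule sum.cong[OF refl])
    fix c assume c: "c \<in> K - {0}"
    have sub: "S_set K \<alpha> c \<subseteq> carrier mult_group_field" using S0[OF c] by auto
    have "count (Delta1 mult_group_field (S_set K \<alpha> c)) z = count (Delta2 mult_group_field (S_set K \<alpha> c) (S_set K \<alpha> c)) z"
      using count_Delta1_Delta2[OF group_mgf finite sub] z by simp
    also have "\<dots> = card {y. Bc y = c \<and> Bc (z*y) = c}" by (rule count_pair[OF z c c])
    also have "{y. Bc y = c \<and> Bc (z*y) = c} = {x \<in> ?S0. Bc x = c}" using c by auto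
    finally show "count (Delta1 mult_group_field (S_set K \<alpha> c)) z = card {x \<in> ?S0. Bc x = c}" .
  qed
  also have "\<dots> = card ?S0"
  proof -
    have "Bc ` ?S0 \<subseteq> K - {0}" using BcK by auto
    from sum.group[OF finite finite this, of "\<lambda>_. (1::nat)"] show ?thesis by simp
  qed
  finally show ?thesis .
qed

lemma count_Ext1:
  assumes z: "z \<noteq> 0" "z \<noteq> 1"
  shows "count (Ext_fam mult_group_field (K-{0}) (S_set K \<alpha>)) z = card {y. Bc y \<noteq> 0 \<and> Bc (z*y) \<noteq> 0 \<and> Bc (z*y) \<noteq> Bc y}"
proof -
  let ?S0 = "{y. Bc y \<noteq> 0 \<and> Bc (z*y) \<noteq> 0 \<and> Bc (z*y) \<noteq> Bc y}"
  let ?T = "{(i, j). i \<in> K-{0} \<and> j \<in> K-{0} \<and> i \<noteq> j}"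
  let ?g = "\<lambda>y. (Bc (z*y), Bc y)"
  have "count (Ext_fam mult_group_field (K-{0}) (S_set K \<alpha>)) z
      = (\<Sum>p\<in>?T. count (Delta2 mult_group_field (S_set K \<alpha> (fst p)) (S_set K \<alpha> (snd p))) z)" by (rule count_Ext_fam)
  also have "\<dots> = (\<Sum>p\<in>?T. card {x \<in> ?S0. ?g x = p})"
  proof (rule sum.cong[OF refl])
    fix p assume p: "p \<in> ?T"
    then have c: "fst p \<in> K - {0}" "snd p \<in> K - {0}" "fst p \<noteq> snd p" by auto
    have "count (Delta2 mult_group_field (S_set K \<alpha> (fst p)) (S_set K \<alpha> (snd p))) z = card {y. Bc y = snd p \<and> Bc (z*y) = fst p}"
      by (rule count_pair[OF z c(1,2)])
    also have "{y. Bc y = snd p \<and> Bc (z*y) = fst p} = {x \<in> ?S0. ?g x = p}" using c by (cases p) auto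
    finally show "count (Delta2 mult_group_field (S_set K \<alpha> (fst p)) (S_set K \<alpha> (snd p))) z = card {x \<in> ?S0. ?g x = p}" .
  qed
  also have "\<dots> = card ?S0"
  proof -
    have fT: "finite ?T" by (rule finite_subset[of _ "K \<times> K"]) auto
    have "?g ` ?S0 \<subseteq> ?T" using BcK by auto
    then show ?thesis using sum.group[of ?S0 ?T ?g "\<lambda>_. (1::nat)"] fT by simp
  qed
  finally show ?thesis .
qed

lemma part1: "DPDF mult_group_field (q^2 - 1) (q - 1) q (q - 1) 0 (K - {0}) (S_set K \<alpha>)"
  unfolding DPDF_def
proof (intro conjI ballI)
  show "disjoint_family_params mult_group_field (q^2-1) (q-1) q (K-{0}) (S_set K \<alpha>)" by (rule dfp1)
  fix x :: 'a assume x: "x \<in> carrier mult_group_field - {\<one>\<^bsub>mult_group_field\<^esub>}"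
  then have x0: "x \<noteq> 0" "x \<noteq> 1" by auto
  show "count (Int_fam mult_group_field (K - {0}) (S_set K \<alpha>)) x = (if x \<in> (\<Union>i\<in>K - {0}. S_set K \<alpha> i) then q - 1 else 0)"
    unfolding count_Int1[OF x0] N_int[OF x0] union_S using Bc_zero by simp
qed

lemma part2: "EPDF mult_group_field (q^2 - 1) (q - 1) q ((q - 1) * (q - 2)) (q^2 - q) (K - {0}) (S_set K \<alpha>)"
  unfolding EPDF_def
proof (intro conjI ballI)
  show "disjoint_family_params mult_group_field (q^2-1) (q-1) q (K-{0}) (S_set K \<alpha>)" by (rule dfp1)
  fix x :: 'a assume x: "x \<in> carrier mult_group_field - {\<one>\<^bsub>mult_group_field\<^esub>}"
  then have x0: "x \<noteq> 0" "x \<noteq> 1" by auto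
  show "count (Ext_fam mult_group_field (K - {0}) (S_set K \<alpha>)) x = (if x \<in> (\<Union>i\<in>K - {0}. S_set K \<alpha> i) then (q - 1) * (q - 2) else q^2 - q)"
    unfolding count_Ext1[OF x0] N_ext[OF x0] union_S using Bc_zero by simp
qed

end



context ffs begin

definition nn :: nat where "nn = q^2 - 1"
definition hh :: "int \<Rightarrow> 'a" where "hh i = \<alpha> ^ nat i"

lemma nn_ge: "nn \<ge> 3"
proof -
  have "q^2 \<ge> 2^2" using q2 by (rule power_mono) simp
  then show ?thesis by (simp add: nn_def)
qed

lemma alpha_nn: "\<alpha> ^ nn = 1"
  using alpha_pow_card[OF alpha0] cU by (simp add: nn_def)

lemma pow_mod: "\<alpha> ^ m = \<alpha> ^ (m mod nn)"
proof -
  have "\<alpha> ^ m = \<alpha> ^ (nn * (m div nn) + m mod nn)" by simp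
  also have "\<dots> = (\<alpha> ^ nn) ^ (m div nn) * \<alpha> ^ (m mod nn)" by (simp only: power_add power_mult)
  finally show ?thesis using alpha_nn by simp
qed

lemma carrier_H: "carrier (integer_mod_group nn) = {0..<int nn}"
  using nn_ge by (simp add: carrier_integer_mod_group)

lemma hh_surj: "y \<noteq> 0 \<Longrightarrow> \<exists>i\<in>{0..<int nn}. hh i = y"
proof -
  assume "y \<noteq> 0"
  then obtain m :: nat where m: "y = \<alpha> ^ m" using prim by (auto simp: primitive_element_def)
  have "int (m mod nn) \<in> {0..<int nn}" using nn_ge by simp
  moreover have "hh (int (m mod nn)) = y" using m pow_mod by (simp add: hh_def)
  ultimately show ?thesis by blast
qed

lemma hh_img: "hh ` {0..<int nn} = UNIV - {0}"
proof (intro equalityI subsetI)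
  fix y assume "y \<in> hh ` {0..<int nn}" then show "y \<in> UNIV - {0}" using alpha0 by (auto simp: hh_def)
next
  fix y :: 'a assume "y \<in> UNIV - {0}" then show "y \<in> hh ` {0..<int nn}" using hh_surj by force
qed

lemma hh_inj: "inj_on hh {0..<int nn}"
proof -
  have "card (hh ` {0..<int nn}) = card {0..<int nn}"
    unfolding hh_img using cU by (simp add: card_Diff_singleton nn_def)
  then show ?thesis by (rule eq_card_imp_inj_on[OF finite_atLeastLessThan_int])
qed

lemma hh_iso: "hh \<in> iso (integer_mod_group nn) mult_group_field"
  unfolding iso_def hom_def
proof (intro CollectI conjI ballI)
  show "hh \<in> carrier (integer_mod_group nn) \<rightarrow> carrier mult_group_field"
    using alpha0 by (auto simp: hh_def)
  show "bij_betw hh (carrier (integer_mod_group nn)) (carrier mult_group_field)"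
    unfolding carrier_H bij_betw_def using hh_inj hh_img by simp
  fix x y assume x: "x \<in> carrier (integer_mod_group nn)" and y: "y \<in> carrier (integer_mod_group nn)"
  then have x0: "0 \<le> x" and y0: "0 \<le> y" by (auto simp: carrier_H)
  have "nat ((x + y) mod int nn) = (nat x + nat y) mod nn"
    using x0 y0 by (simp add: nat_mod_distrib nat_add_distrib)
  then have "hh ((x + y) mod int nn) = \<alpha> ^ (nat x + nat y)"
    by (simp add: hh_def pow_mod[of "nat x + nat y"])
  then show "hh (x \<otimes>\<^bsub>integer_mod_group nn\<^esub> y) = hh x \<otimes>\<^bsub>mult_group_field\<^esub> hh y"
    by (simp add: hh_def power_add)
qed

lemma S'_sub: "S'_set q K \<alpha> c \<subseteq> carrier (integer_mod_group nn)"
  unfolding carrier_H S'_set_def using nn_ge by (auto simp: nn_def)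

lemma S'_img: "S_set K \<alpha> c = hh ` S'_set q K \<alpha> c"
proof (intro equalityI subsetI)
  fix y assume y: "y \<in> S_set K \<alpha> c"
  then have "y \<noteq> 0" by (simp add: S_set_def)
  then obtain i where i: "i \<in> {0..<int nn}" "hh i = y" using hh_surj by blast
  have "i \<le> int (q^2 - 2)" using i(1) nn_ge by (auto simp: nn_def)
  then have "i \<in> S'_set q K \<alpha> c" using i y by (simp add: S'_set_def hh_def)
  then show "y \<in> hh ` S'_set q K \<alpha> c" using i by blast
next
  fix y assume "y \<in> hh ` S'_set q K \<alpha> c"
  then show "y \<in> S_set K \<alpha> c" by (auto simp: S'_set_def hh_def)
qed

lemma fin_H: "finite (carrier (integer_mod_group nn))" by (simp add: carrier_H)
lemma sub_H: "\<forall>i\<in>K-{0}. S'_set q K \<alpha> i \<subseteq> carrier (integer_mod_group nn)" using S'_sub by blast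
lemma img_H: "\<forall>i\<in>K-{0}. S_set K \<alpha> i = hh ` S'_set q K \<alpha> i" using S'_img by blast

lemma part3: "DPDF (integer_mod_group (q^2 - 1)) (q^2 - 1) (q - 1) q (q - 1) 0 (K - {0}) (S'_set q K \<alpha>)"
  using transport_DPDF[OF group_integer_mod_group group_mgf hh_iso fin_H sub_H img_H part1]
  unfolding nn_def .

lemma part4: "EPDF (integer_mod_group (q^2 - 1)) (q^2 - 1) (q - 1) q ((q - 1) * (q - 2)) (q^2 - q) (K - {0}) (S'_set q K \<alpha>)"
  using transport_EPDF[OF group_integer_mod_group group_mgf hh_iso fin_H sub_H img_H part2]
  unfolding nn_def .

end


theorem mainTheorem1:
  fixes q :: nat and K :: "'a::{field,finite} set" and \<alpha> :: 'a
  assumes "prime_power q"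
    and "card (UNIV :: 'a set) = q ^ 2"
    and "is_subfield K" and "card K = q"
    and "primitive_element \<alpha>"
  shows "DPDF mult_group_field (q^2 - 1) (q - 1) q (q - 1) 0 (K - {0}) (S_set K \<alpha>)
       \<and> EPDF mult_group_field (q^2 - 1) (q - 1) q ((q - 1) * (q - 2)) (q^2 - q) (K - {0}) (S_set K \<alpha>)
       \<and> DPDF (integer_mod_group (q^2 - 1)) (q^2 - 1) (q - 1) q (q - 1) 0 (K - {0}) (S'_set q K \<alpha>)
       \<and> EPDF (integer_mod_group (q^2 - 1)) (q^2 - 1) (q - 1) q ((q - 1) * (q - 2)) (q^2 - q) (K - {0}) (S'_set q K \<alpha>)"
proof -
  obtain p m where pm: "prime p" "m \<ge> 1" "q = p ^ m" using assms(1) by (auto simp: prime_power_def)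
  have "p \<ge> 2" using pm(1) by (simp add: prime_ge_2_nat)
  moreover have "p \<le> p ^ m" using pm(2) \<open>p \<ge> 2\<close> by (simp add: self_le_power)
  ultimately have q2: "q \<ge> 2" using pm(3) by simp
  interpret ffs q K \<alpha> using assms(2-5) q2 by unfold_locales
  show ?thesis using part1 part2 part3 part4 by blast
qed

end
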